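(* Let $A,B\subseteq\mathbb{N}$ with $A\cap B=\emptyset$, $A\in\mathcal{D}$ and $\underline{\underline{d}}(B)=0$. Then $\underline{\underline{d}}(A\cup B)=d(A)$.
   Context: $\mathbb{N}=\{1,2,3,\dots\}$. For $A\subseteq\mathbb{N}$ let $A(n)=|A\cap[1,n]|$. Let $\mathcal{D}$ be the collection of all $A\subseteq\mathbb{N}$ for which the asymptotic density $d(A)=\lim_{n\to\infty}\frac{A(n)}{n}$ exists. Define $\underline{\underline{d}}(A)=\sup\{d(B);\ B\subseteq A,\ B\in\mathcal{D}\}$. *)

theory Defs
  imports "HOL-Analysis.Analysis"
begin

definition counting :: "nat set \<Rightarrow> nat \<Rightarrow> nat" where
  "counting A n = card (A \<inter> {1..n})"

definition has_density :: "nat set \<Rightarrow> real \<Rightarrow> bool" where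
  "has_density A d \<longleftrightarrow> ((\<lambda>n. real (counting A n) / real n) \<longlongrightarrow> d) sequentially"

definition density_sets :: "nat set set" where
  "density_sets = {A. A \<subseteq> {1..} \<and> (\<exists>d. has_density A d)}"

definition density :: "nat set \<Rightarrow> real" where
  "density A = lim (\<lambda>n. real (counting A n) / real n)"

definition inner_density :: "nat set \<Rightarrow> real" where
  "inner_density A = Sup {density B | B. B \<subseteq> A \<and> B \<in> density_sets}"

end

theory Submission
  imports Defs
begin

lemma counting_Suc:
  "counting X (Suc n) = counting X n + (if Suc n \<in> X then 1 else 0)"
proof -
  have "X \<inter> {1..Suc n} = (if Suc n \<in> X then insert (Suc n) (X \<inter> {1..n}) else X \<inter> {1..n})"
    by (auto simp: le_Suc_eq)
  then show ?thesis unfolding counting_def by auto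
qed

lemma counting_le: "counting X n \<le> n"
proof -
  have "card (X \<inter> {1..n}) \<le> card {1..n}" by (rule card_mono) auto
  then show ?thesis unfolding counting_def by simp
qed

lemma counting_sub:
  assumes "C \<subseteq> F \<union> A" "m \<le> n"
  shows "real (counting C n) - counting C m \<le>
         (real (counting F n) - counting F m) + (real (counting A n) - counting A m)"
  using assms(2)
proof (induction n rule: dec_induct)
  case base then show ?case by simp
next
  case (step n)
  have "real (counting C (Suc n)) - counting C n \<le>
        (real (counting F (Suc n)) - counting F n) + (real (counting A (Suc n)) - counting A n)"
    using assms(1) by (auto simp: counting_Suc)
  with step.IH show ?case by linarith
qed

primrec grd :: "nat set \<Rightarrow> real \<Rightarrow> nat \<Rightarrow> nat" where
  "grd F c 0 = 0"
| "grd F c (Suc k) = (if Suc k \<in> F \<and> real (grd F c k) + 1 \<le> c * real (Suc k)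
                       then Suc (grd F c k) else grd F c k)"

definition grdset :: "nat set \<Rightarrow> real \<Rightarrow> nat set" where
  "grdset F c = {Suc k | k. Suc k \<in> F \<and> real (grd F c k) + 1 \<le> c * real (Suc k)}"

lemma grdset_sub: "grdset F c \<subseteq> F" unfolding grdset_def by auto

lemma counting_grdset: "counting (grdset F c) n = grd F c n"
proof (induction n)
  case 0 then show ?case by (simp add: counting_def)
next
  case (Suc n)
  have "Suc n \<in> grdset F c \<longleftrightarrow> Suc n \<in> F \<and> real (grd F c n) + 1 \<le> c * real (Suc n)"
    unfolding grdset_def by auto
  then show ?case using Suc by (simp add: counting_Suc)
qed

lemma grd_le: assumes "c \<ge> 0" shows "real (grd F c n) \<le> c * real n"
proof (induction n)
  case 0 then show ?case by simp
next
  case (Suc n)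
  have "c * real n \<le> c * real (Suc n)" using assms by (intro mult_left_mono) auto
  then show ?case using Suc by auto
qed

lemma grd_key:
  "\<exists>m\<le>n. c * real m - real (grd F c m) < 1 \<and>
     real (grd F c n) - real (grd F c m) \<ge> real (counting F n) - real (counting F m)"
proof (induction n)
  case 0 then show ?case by simp
next
  case (Suc n)
  show ?case
  proof (cases "c * real (Suc n) - real (grd F c (Suc n)) < 1")
    case True then show ?thesis by (intro exI[of _ "Suc n"]) auto
  next
    case False
    from Suc obtain m where m: "m \<le> n" "c * real m - real (grd F c m) < 1"
      "real (grd F c n) - real (grd F c m) \<ge> real (counting F n) - real (counting F m)" by blast
    have "real (grd F c (Suc n)) - real (grd F c n) \<ge>
          real (counting F (Suc n)) - real (counting F n)"
    proof (cases "Suc n \<in> F")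
      case True
      have "real (grd F c n) + 1 \<le> c * real (Suc n)"
      proof (rule ccontr)
        assume "\<not> ?thesis"
        then have "grd F c (Suc n) = grd F c n" by simp
        with False \<open>\<not> ?thesis\<close> show False by linarith
      qed
      then show ?thesis using True by (simp add: counting_Suc)
    next
      case f: False
      then show ?thesis by (simp add: counting_Suc)
    qed
    with m show ?thesis by (intro exI[of _ m]) auto
  qed
qed

lemma greedy:
  fixes F :: "nat set" and c :: real
  assumes c: "c \<ge> 0"
    and H: "\<And>e. e > 0 \<Longrightarrow> \<exists>N. \<forall>n\<ge>N. \<forall>m\<le>n.
              real (counting F n) - real (counting F m) \<ge> c * (real n - real m) - e * real n"
  shows "has_density (grdset F c) c"
  unfolding has_density_def counting_grdset
proof (rule LIMSEQ_I)
  fix r :: real assume r: "r > 0"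
  obtain N where N: "\<forall>n\<ge>N. \<forall>m\<le>n.
      real (counting F n) - real (counting F m) \<ge> c * (real n - real m) - (r/2) * real n"
    using H[of "r/2"] r by auto
  obtain K :: nat where K: "real K > 2 / r" using reals_Archimedean2 by blast
  show "\<exists>no. \<forall>n\<ge>no. norm (real (grd F c n) / real n - c) < r"
  proof (intro exI allI impI)
    fix n assume n: "n \<ge> max N (Suc K)"
    then have npos: "real n > 0" by auto
    have "real n > 2 / r" using n K by auto
    then have inv: "1 < (r/2) * real n" using r by (simp add: field_simps)
    obtain m where m: "m \<le> n" "c * real m - real (grd F c m) < 1"
      "real (grd F c n) - real (grd F c m) \<ge> real (counting F n) - real (counting F m)"
      using grd_key by blast
    have "real (counting F n) - real (counting F m) \<ge> c * (real n - real m) - (r/2) * real n"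
      using N n m(1) by auto
    then have up: "c * real n - real (grd F c n) < r * real n"
      using m inv by (simp add: algebra_simps) 
    have lo: "real (grd F c n) \<le> c * real n" using grd_le[OF c] .
    have "real (grd F c n) / real n - c = (real (grd F c n) - c * real n) / real n"
      using npos by (simp add: field_simps)
    moreover have "\<bar>real (grd F c n) - c * real n\<bar> < r * real n" using up lo by auto
    ultimately show "norm (real (grd F c n) / real n - c) < r"
      using npos by (simp add: abs_divide divide_less_eq)
  qed
qed

lemma density_eq: "has_density X d \<Longrightarrow> density X = d"
  unfolding has_density_def density_def by (rule limI)

lemma density_le1:
  assumes "X \<in> density_sets" shows "density X \<le> 1"
proof -
  from assms obtain d where d: "has_density X d" unfolding density_sets_def by auto
  have "\<forall>n. real (counting X n) / real n \<le> 1"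
  proof
    fix n show "real (counting X n) / real n \<le> 1"
      using counting_le[of X n] by (cases "n = 0") (auto simp: divide_le_eq)
  qed
  then have "d \<le> 1" using d unfolding has_density_def
    by (intro LIMSEQ_le_const2) auto
  then show ?thesis using density_eq[OF d] by simp
qed

lemma approx:
  assumes "has_density X d" "e > 0"
  shows "\<exists>N. \<forall>n\<ge>N. \<bar>real (counting X n) - d * real n\<bar> \<le> e * real n"
proof -
  from assms LIMSEQ_D[of _ d e] obtain N where
    N: "\<forall>n\<ge>N. norm (real (counting X n) / real n - d) < e"
    unfolding has_density_def by blast
  show ?thesis
  proof (intro exI allI impI)
    fix n assume n: "n \<ge> N"
    show "\<bar>real (counting X n) - d * real n\<bar> \<le> e * real n"
    proof (cases "n = 0")
      case True then show ?thesis by (simp add: counting_def)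
    next
      case False
      then have np: "real n > 0" by auto
      have "real (counting X n) - d * real n = (real (counting X n) / real n - d) * real n"
        using np by (simp add: field_simps)
      then have "\<bar>real (counting X n) - d * real n\<bar> = \<bar>real (counting X n) / real n - d\<bar> * real n"
        using np by (simp add: abs_mult)
      also have "\<dots> \<le> e * real n" using N n np by (intro mult_right_mono) auto
      finally show ?thesis .
    qed
  qed
qed

lemma main_bound:
  assumes C: "has_density C g" and A: "has_density A a" and sub: "C \<subseteq> (C - A) \<union> A"
    and e: "e > 0"
  shows "\<exists>N. \<forall>n\<ge>N. \<forall>m\<le>n. real (counting (C - A) n) - real (counting (C - A) m)
            \<ge> (g - a) * (real n - real m) - e * real n"
proof -
  obtain N1 where N1: "\<forall>n\<ge>N1. \<bar>real (counting C n) - g * real n\<bar> \<le> (e/8) * real n"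
    using approx[OF C, of "e/8"] e by auto
  obtain N2 where N2: "\<forall>n\<ge>N2. \<bar>real (counting A n) - a * real n\<bar> \<le> (e/8) * real n"
    using approx[OF A, of "e/8"] e by auto
  define M where "M = max N1 N2"
  obtain K :: nat where K: "real K \<ge> 4 * real M / e" using real_arch_simple by blast
  show ?thesis
  proof (intro exI allI impI)
    fix n m assume n: "n \<ge> max M K" and m: "m \<le> n"
    have cs: "real (counting C n) - counting C m \<le>
         (real (counting (C-A) n) - counting (C-A) m) + (real (counting A n) - counting A m)"
      by (rule counting_sub[OF sub m])
    have Cn: "\<bar>real (counting C n) - g * real n\<bar> \<le> (e/8) * real n" using N1 n unfolding M_def by auto
    have An: "\<bar>real (counting A n) - a * real n\<bar> \<le> (e/8) * real n" using N2 n unfolding M_def by auto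
    have mn: "real m \<le> real n" using m by simp
    show "real (counting (C - A) n) - real (counting (C - A) m)
            \<ge> (g - a) * (real n - real m) - e * real n"
    proof (cases "m \<ge> M")
      case True
      have Cm: "\<bar>real (counting C m) - g * real m\<bar> \<le> (e/8) * real m" using N1 True unfolding M_def by auto
      have Am: "\<bar>real (counting A m) - a * real m\<bar> \<le> (e/8) * real m" using N2 True unfolding M_def by auto
      have "(e/8) * real m \<le> (e/8) * real n" using mn e by (intro mult_left_mono) auto
      then show ?thesis using Cn An Cm Am cs
        unfolding abs_le_iff by (simp add: algebra_simps)
    next
      case False
      have cm: "real (counting C m) \<le> real M" using counting_le[of C m] False by simp
      have am: "real (counting A m) \<ge> 0" by simp
      have "real K * e \<ge> 4 * real M" using K e by (simp add: field_simps)
      moreover have "real n * e \<ge> real K * e" using n e by (intro mult_right_mono) auto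
      ultimately have Mn: "real M \<le> (e/4) * real n" by (simp add: mult.commute)
      have "(g - a) * (real n - real m) \<le> (g - a) * real n + (- (g - a)) * real m"
        by (simp add: algebra_simps)
      show ?thesis
      proof (cases "g - a \<ge> 0")
        case True
        have "(g - a) * (real n - real m) \<le> (g - a) * real n"
          using True by (simp add: mult_right_mono algebra_simps)
        then show ?thesis using Cn An cs cm am Mn unfolding abs_le_iff by (simp add: algebra_simps)
      next
        case False
        have "(g - a) * (real n - real m) \<le> 0" using False mn
          by (simp add: mult_nonpos_nonneg)
        moreover have "real (counting (C - A) n) \<ge> real (counting (C - A) m)"
          unfolding counting_def using m by (intro of_nat_mono card_mono) auto 
        ultimately show ?thesis using e by (smt (verit) mult_nonneg_nonneg of_nat_0_le_iff)
      qed
    qed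
  qed
qed

theorem lemma3p8:
  fixes A B :: "nat set"
  assumes "A \<subseteq> {1..}" and "B \<subseteq> {1..}"
    and "A \<inter> B = {}"
    and "A \<in> density_sets"
    and "inner_density B = 0"
  shows "inner_density (A \<union> B) = density A"
proof -
  obtain a where a: "has_density A a" using assms(4) unfolding density_sets_def by auto
  have da: "density A = a" using density_eq[OF a] .
  have bdd: "bdd_above {density X | X. X \<subseteq> B \<and> X \<in> density_sets}"
    using density_le1 by (intro bdd_aboveI[of _ 1]) auto
  have le: "density C \<le> a" if C: "C \<subseteq> A \<union> B" "C \<in> density_sets" for C
  proof (rule ccontr)
    assume "\<not> ?thesis"
    then have gt: "density C > a" by simp
    obtain g where g: "has_density C g" using C(2) unfolding density_sets_def by auto
    have dg: "density C = g" using density_eq[OF g] .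
    define G where "G = grdset (C - A) (g - a)"
    have hG: "has_density G (g - a)" unfolding G_def
      apply (rule greedy)
      using gt dg apply simp
      using main_bound[OF g a] by blast
    have GB: "G \<subseteq> B" using grdset_sub[of "C - A" "g - a"] C(1) unfolding G_def by auto
    then have "G \<in> density_sets" using hG assms(2) unfolding density_sets_def by auto
    then have "density G \<le> inner_density B" unfolding inner_density_def
      using GB by (intro cSup_upper[OF _ bdd]) auto
    then show False using density_eq[OF hG] gt dg assms(5) by simp
  qed
  show ?thesis unfolding inner_density_def da
    apply (rule cSup_eq_maximum)
    using assms(4) da apply blast
    using le by blast
qed

end
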